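(* There is a minimal topological dynamical system which is $\mathcal{F}_t$-sensitive and not strongly $\mathcal{F}_t$-sensitive.
   Context: A topological dynamical system $(X,T)$: compact metric space $(X,d)$, $T$ continuous surjective; minimal means every orbit is dense. A set $F\subset\mathbb{Z}_+$ is thick if it contains arbitrarily long blocks of consecutive integers. $(X,T)$ is $\mathcal{F}_t$-sensitive if there is $\delta>0$ such that for each nonempty open $U$ the set $\{n\in\mathbb{N}:\operatorname{diam}(T^nU)>\delta\}$ is thick. $(X,T)$ is strongly $\mathcal{F}_t$-sensitive if there is $\delta>0$ such that for each nonempty open $U$ there are $x,y\in U$ with $\{n\in\mathbb{Z}_+: d(T^nx,T^ny)>\delta\}$ thick. *)

theory Defs
  imports "HOL-Analysis.Analysis"
begin

definition tds :: "'a metric \<Rightarrow> ('a \<Rightarrow> 'a) \<Rightarrow> bool" where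
  "tds m T \<longleftrightarrow> compact_space (mtopology_of m)
     \<and> continuous_map (mtopology_of m) (mtopology_of m) T
     \<and> T ` mspace m = mspace m"

definition minimal_tds :: "'a metric \<Rightarrow> ('a \<Rightarrow> 'a) \<Rightarrow> bool" where
  "minimal_tds m T \<longleftrightarrow> (\<forall>x \<in> mspace m.
     (mtopology_of m) closure_of {(T ^^ n) x | n. True} = mspace m)"

definition thick :: "nat set \<Rightarrow> bool" where
  "thick F \<longleftrightarrow> (\<forall>k. \<exists>a. {a..<a+k} \<subseteq> F)"

definition mdiam :: "'a metric \<Rightarrow> 'a set \<Rightarrow> real" where
  "mdiam m S = Sup {mdist m x y | x y. x \<in> S \<and> y \<in> S}"

definition Ft_sensitive :: "'a metric \<Rightarrow> ('a \<Rightarrow> 'a) \<Rightarrow> bool" where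
  "Ft_sensitive m T \<longleftrightarrow> (\<exists>\<delta>>0. \<forall>U. openin (mtopology_of m) U \<and> U \<noteq> {} \<longrightarrow>
     thick {n. n \<ge> 1 \<and> mdiam m ((T ^^ n) ` U) > \<delta>})"

definition strongly_Ft_sensitive :: "'a metric \<Rightarrow> ('a \<Rightarrow> 'a) \<Rightarrow> bool" where
  "strongly_Ft_sensitive m T \<longleftrightarrow> (\<exists>\<delta>>0. \<forall>U. openin (mtopology_of m) U \<and> U \<noteq> {} \<longrightarrow>
     (\<exists>x\<in>U. \<exists>y\<in>U. thick {n. mdist m ((T ^^ n) x) ((T ^^ n) y) > \<delta>}))"

end

theory Submission
  imports Defs
begin


definition conjm :: "'a metric \<Rightarrow> ('a\<Rightarrow>'a) \<Rightarrow> 'b metric \<Rightarrow> ('b\<Rightarrow>'b) \<Rightarrow> ('a\<Rightarrow>'b) \<Rightarrow> bool" where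
 "conjm m0 T0 m1 T1 e \<longleftrightarrow> e ` mspace m0 = mspace m1
   \<and> (\<forall>x\<in>mspace m0. \<forall>y\<in>mspace m0. mdist m1 (e x) (e y) = mdist m0 x y)
   \<and> (\<forall>x\<in>mspace m0. T1 (e x) = e (T0 x)) \<and> T0 ` mspace m0 \<subseteq> mspace m0"

lemma conjmD:
  assumes "conjm m0 T0 m1 T1 e"
  shows "e ` mspace m0 = mspace m1"
    "\<And>x y. x\<in>mspace m0 \<Longrightarrow> y\<in>mspace m0 \<Longrightarrow> mdist m1 (e x) (e y) = mdist m0 x y"
    "\<And>x. x\<in>mspace m0 \<Longrightarrow> T1 (e x) = e (T0 x)"
    "\<And>x. x\<in>mspace m0 \<Longrightarrow> T0 x \<in> mspace m0"
  using assms unfolding conjm_def by auto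

lemma conjm_inj: "conjm m0 T0 m1 T1 e \<Longrightarrow> inj_on e (mspace m0)"
proof (rule inj_onI)
  fix x y assume c: "conjm m0 T0 m1 T1 e" and xy: "x \<in> mspace m0" "y \<in> mspace m0" "e x = e y"
  have "mdist m0 x y = mdist m1 (e x) (e y)" using conjmD(2)[OF c xy(1,2)] by simp
  also have "\<dots> = 0"
  proof -
    have "e y \<in> mspace m1" using conjmD(1)[OF c] xy(2) by blast
    then show ?thesis using xy(3) by simp
  qed
  finally show "x = y" using xy by simp
qed

lemma conjm_sym:
  assumes c: "conjm m0 T0 m1 T1 e"
  shows "conjm m1 T1 m0 T0 (inv_into (mspace m0) e)"
proof -
  have inj: "inj_on e (mspace m0)" using conjm_inj[OF c] .
  have im: "e ` mspace m0 = mspace m1" using conjmD(1)[OF c] .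
  let ?g = "inv_into (mspace m0) e"
  have g1: "?g y \<in> mspace m0" "e (?g y) = y" if "y \<in> mspace m1" for y
    using im that by (auto intro: f_inv_into_f inv_into_into)
  have g2: "\<And>x. x \<in> mspace m0 \<Longrightarrow> ?g (e x) = x" using inj by simp
  show ?thesis unfolding conjm_def
  proof (intro conjI ballI)
    show "?g ` mspace m1 = mspace m0"
    proof
      show "?g ` mspace m1 \<subseteq> mspace m0" using g1 by blast
      show "mspace m0 \<subseteq> ?g ` mspace m1"
      proof
        fix x assume x: "x \<in> mspace m0"
        then have "e x \<in> mspace m1" using im by blast
        then show "x \<in> ?g ` mspace m1" using g2[OF x] by (metis image_eqI)
      qed
    qed
    fix x y assume xy: "x \<in> mspace m1" "y \<in> mspace m1"
    have "mdist m1 (e (?g x)) (e (?g y)) = mdist m0 (?g x) (?g y)"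
      using conjmD(2)[OF c g1(1)[OF xy(1)] g1(1)[OF xy(2)]] .
    then show "mdist m0 (?g x) (?g y) = mdist m1 x y"
      using g1(2)[OF xy(1)] g1(2)[OF xy(2)] by simp
  next
    fix x assume x: "x \<in> mspace m1"
    then obtain a where a: "a \<in> mspace m0" "x = e a" using im by blast
    have Ta: "T0 a \<in> mspace m0" using conjmD(4)[OF c a(1)] .
    have "?g (T1 x) = ?g (e (T0 a))" using conjmD(3)[OF c a(1)] a(2) by simp
    also have "\<dots> = T0 a" using g2[OF Ta] .
    also have "\<dots> = T0 (?g x)" using g2[OF a(1)] a(2) by simp
    finally show "T0 (?g x) = ?g (T1 x)" by simp
  next
    show "T1 ` mspace m1 \<subseteq> mspace m1"
    proof
      fix y assume "y \<in> T1 ` mspace m1"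
      then obtain x where x: "x \<in> mspace m1" "y = T1 x" by blast
      then obtain a where a: "a \<in> mspace m0" "x = e a" using im by blast
      have "T0 a \<in> mspace m0" using conjmD(4)[OF c a(1)] .
      then have "e (T0 a) \<in> mspace m1" using im by blast
      then show "y \<in> mspace m1" using conjmD(3)[OF c a(1)] a x by simp
    qed
  qed
qed

lemma conjm_iter:
  assumes c: "conjm m0 T0 m1 T1 e" and x: "x \<in> mspace m0"
  shows "(T0^^n) x \<in> mspace m0 \<and> (T1^^n) (e x) = e ((T0^^n) x)"
proof (induction n)
  case 0 then show ?case using x by simp
next
  case (Suc n)
  then show ?case using conjmD(3,4)[OF c] by simp
qed

lemma conjm_homeo:
  assumes c: "conjm m0 T0 m1 T1 e"
  shows "homeomorphic_map (mtopology_of m0) (mtopology_of m1) e"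
proof -
  have inj: "inj_on e (mspace m0)" using conjm_inj[OF c] .
  have im: "e ` mspace m0 = mspace m1" using conjmD(1)[OF c] .
  let ?g = "inv_into (mspace m0) e"
  have c2: "conjm m1 T1 m0 T0 ?g" using conjm_sym[OF c] .
  have L1: "Lipschitz_continuous_map m0 m1 e"
    unfolding Lipschitz_continuous_map_def
  proof (intro conjI exI[of _ 1] ballI)
    show "e \<in> mspace m0 \<rightarrow> mspace m1" using im by auto
    fix x y assume "x \<in> mspace m0" "y \<in> mspace m0"
    then show "mdist m1 (e x) (e y) \<le> 1 * mdist m0 x y" using conjmD(2)[OF c] by simp
  qed
  have im2: "?g ` mspace m1 = mspace m0" using conjmD(1)[OF c2] .
  have L2: "Lipschitz_continuous_map m1 m0 ?g"
    unfolding Lipschitz_continuous_map_def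
  proof (intro conjI exI[of _ 1] ballI)
    show "?g \<in> mspace m1 \<rightarrow> mspace m0" using im2 by auto
    fix x y assume "x \<in> mspace m1" "y \<in> mspace m1"
    then show "mdist m0 (?g x) (?g y) \<le> 1 * mdist m1 x y" using conjmD(2)[OF c2] by simp
  qed
  have "homeomorphic_maps (mtopology_of m0) (mtopology_of m1) e ?g"
    unfolding homeomorphic_maps_def
  proof (intro conjI ballI)
    show "continuous_map (mtopology_of m0) (mtopology_of m1) e"
      using Lipschitz_continuous_imp_continuous_map[OF L1] .
    show "continuous_map (mtopology_of m1) (mtopology_of m0) ?g"
      using Lipschitz_continuous_imp_continuous_map[OF L2] .
    fix x assume "x \<in> topspace (mtopology_of m0)"
    then show "?g (e x) = x" using inj by simp
  next
    fix y assume "y \<in> topspace (mtopology_of m1)"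
    then show "e (?g y) = y" using im by (simp add: f_inv_into_f)
  qed
  then show ?thesis using homeomorphic_maps_imp_map by blast
qed

lemma conjm_tds:
  assumes c: "conjm m0 T0 m1 T1 e" and t: "tds m0 T0"
  shows "tds m1 T1"
proof -
  have h: "homeomorphic_map (mtopology_of m0) (mtopology_of m1) e" using conjm_homeo[OF c] .
  have im: "e ` mspace m0 = mspace m1" using conjmD(1)[OF c] .
  obtain g where g: "homeomorphic_maps (mtopology_of m0) (mtopology_of m1) e g"
    using h homeomorphic_map_maps by blast
  have hs: "mtopology_of m0 homeomorphic_space mtopology_of m1"
    using h unfolding homeomorphic_space by blast
  have cs: "compact_space (mtopology_of m1)"
    using t homeomorphic_compact_space[OF hs] unfolding tds_def by simp
  have gc: "continuous_map (mtopology_of m1) (mtopology_of m0) g"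
    and ec: "continuous_map (mtopology_of m0) (mtopology_of m1) e"
    and ge: "\<And>y. y \<in> topspace (mtopology_of m1) \<Longrightarrow> e (g y) = y"
    using g unfolding homeomorphic_maps_def by auto
  have gm: "\<And>y. y \<in> mspace m1 \<Longrightarrow> g y \<in> mspace m0"
    using gc unfolding continuous_map_def by auto
  have Tc: "continuous_map (mtopology_of m0) (mtopology_of m0) T0" using t unfolding tds_def by simp
  have "continuous_map (mtopology_of m1) (mtopology_of m1) (e \<circ> (T0 \<circ> g))"
    using continuous_map_compose[OF continuous_map_compose[OF gc Tc] ec] by (simp add: o_assoc)
  moreover have "\<And>y. y \<in> topspace (mtopology_of m1) \<Longrightarrow> (e \<circ> (T0 \<circ> g)) y = T1 y"
  proof -
    fix y assume y: "y \<in> topspace (mtopology_of m1)"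
    then have "T1 y = T1 (e (g y))" using ge by simp
    also have "\<dots> = e (T0 (g y))" using conjmD(3)[OF c gm] y by simp
    finally show "(e \<circ> (T0 \<circ> g)) y = T1 y" by simp
  qed
  ultimately have cm: "continuous_map (mtopology_of m1) (mtopology_of m1) T1"
    using continuous_map_eq by blast
  have "T1 ` mspace m1 = T1 ` e ` mspace m0" using im by simp
  also have "\<dots> = e ` T0 ` mspace m0"
    unfolding image_image using conjmD(3)[OF c] by (intro image_cong) auto
  also have "\<dots> = mspace m1" using t im unfolding tds_def by simp
  finally show ?thesis using cs cm unfolding tds_def by simp
qed

lemma conjm_minimal:
  assumes c: "conjm m0 T0 m1 T1 e" and t: "minimal_tds m0 T0"
  shows "minimal_tds m1 T1"
  unfolding minimal_tds_def
proof
  fix y assume y: "y \<in> mspace m1"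
  have h: "homeomorphic_map (mtopology_of m0) (mtopology_of m1) e" using conjm_homeo[OF c] .
  have im: "e ` mspace m0 = mspace m1" using conjmD(1)[OF c] .
  obtain x where x: "x \<in> mspace m0" "y = e x" using im y by blast
  have orb: "{(T1 ^^ n) y |n. True} = e ` {(T0 ^^ n) x |n. True}"
    using conjm_iter[OF c x(1)] x(2) by auto
  have sub: "{(T0 ^^ n) x |n. True} \<subseteq> topspace (mtopology_of m0)"
    using conjm_iter[OF c x(1)] by auto
  have "mtopology_of m0 closure_of {(T0 ^^ n) x |n. True} = mspace m0"
    using t x unfolding minimal_tds_def by simp
  then show "mtopology_of m1 closure_of {(T1 ^^ n) y |n. True} = mspace m1"
    unfolding orb homeomorphic_map_closure_of[OF h sub] using im by simp
qed

lemma conjm_open: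
  assumes c: "conjm m0 T0 m1 T1 e" and U: "openin (mtopology_of m1) U"
  shows "\<exists>V. openin (mtopology_of m0) V \<and> U = e ` V"
proof -
  let ?g = "inv_into (mspace m0) e"
  have c2: "conjm m1 T1 m0 T0 ?g" using conjm_sym[OF c] .
  have h2: "homeomorphic_map (mtopology_of m1) (mtopology_of m0) ?g"
    using conjm_homeo[OF c2] .
  have im: "e ` mspace m0 = mspace m1" using conjmD(1)[OF c] .
  have Us: "U \<subseteq> mspace m1" using U openin_subset by fastforce
  have o: "openin (mtopology_of m0) (?g ` U)"
    using homeomorphic_map_openness[OF h2] U Us by simp
  have "U = e ` (?g ` U)"
    unfolding image_image
  proof -
    have "e (?g y) = y" if y: "y \<in> U" for y
    proof -
      have "y \<in> e ` mspace m0" using Us im y by blast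
      then show ?thesis by (rule f_inv_into_f)
    qed
    then show "U = (\<lambda>y. e (?g y)) ` U" by simp
  qed
  then show ?thesis using o by blast
qed

lemma conjm_mdiam:
  assumes c: "conjm m0 T0 m1 T1 e" and S: "S \<subseteq> mspace m0"
  shows "mdiam m1 (e ` S) = mdiam m0 S"
proof -
  have "{mdist m1 x y |x y. x \<in> e ` S \<and> y \<in> e ` S} = {mdist m0 x y |x y. x \<in> S \<and> y \<in> S}"
  proof (intro set_eqI iffI)
    fix r assume "r \<in> {mdist m1 x y |x y. x \<in> e ` S \<and> y \<in> e ` S}"
    then obtain a b where ab: "a \<in> S" "b \<in> S" "r = mdist m1 (e a) (e b)" by blast
    have abm: "a \<in> mspace m0" "b \<in> mspace m0" using ab S by auto
    have "r = mdist m0 a b" using conjmD(2)[OF c abm] ab(3) by simp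
    then show "r \<in> {mdist m0 x y |x y. x \<in> S \<and> y \<in> S}" using ab by blast
  next
    fix r assume "r \<in> {mdist m0 x y |x y. x \<in> S \<and> y \<in> S}"
    then obtain a b where ab: "a \<in> S" "b \<in> S" "r = mdist m0 a b" by blast
    have abm: "a \<in> mspace m0" "b \<in> mspace m0" using ab S by auto
    have "r = mdist m1 (e a) (e b)" using conjmD(2)[OF c abm] ab(3) by simp
    then show "r \<in> {mdist m1 x y |x y. x \<in> e ` S \<and> y \<in> e ` S}" using ab by blast
  qed
  then show ?thesis unfolding mdiam_def by simp
qed

lemma conjm_Ft:
  assumes c: "conjm m0 T0 m1 T1 e" and t: "Ft_sensitive m0 T0"
  shows "Ft_sensitive m1 T1"
proof -
  obtain d where d: "d > 0" "\<And>U. openin (mtopology_of m0) U \<Longrightarrow> U \<noteq> {} \<Longrightarrow>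
     thick {n. n \<ge> 1 \<and> mdiam m0 ((T0 ^^ n) ` U) > d}"
    using t unfolding Ft_sensitive_def by blast
  show ?thesis unfolding Ft_sensitive_def
  proof (intro exI conjI allI impI)
    show "d > 0" by fact
    fix U assume U: "openin (mtopology_of m1) U \<and> U \<noteq> {}"
    then obtain V where V: "openin (mtopology_of m0) V" "U = e ` V" using conjm_open[OF c] by blast
    have Vs: "V \<subseteq> mspace m0" using V(1) openin_subset by fastforce
    have eq: "(T1 ^^ n) ` U = e ` ((T0 ^^ n) ` V)" for n
      unfolding V(2) image_image
    proof (intro image_cong refl)
      fix x assume "x \<in> V"
      then show "(T1 ^^ n) (e x) = e ((T0 ^^ n) x)" using conjm_iter[OF c] Vs by blast
    qed
    have sub: "(T0 ^^ n) ` V \<subseteq> mspace m0" for n using Vs conjm_iter[OF c] by blast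
    have "{n. n \<ge> 1 \<and> mdiam m1 ((T1 ^^ n) ` U) > d} = {n. n \<ge> 1 \<and> mdiam m0 ((T0 ^^ n) ` V) > d}"
      unfolding eq conjm_mdiam[OF c sub] ..
    moreover have "V \<noteq> {}" using U V by blast
    ultimately show "thick {n. n \<ge> 1 \<and> mdiam m1 ((T1 ^^ n) ` U) > d}"
      using d V by simp
  qed
qed

lemma conjm_strong:
  assumes c: "conjm m0 T0 m1 T1 e" and t: "strongly_Ft_sensitive m0 T0"
  shows "strongly_Ft_sensitive m1 T1"
proof -
  obtain d where d: "d > 0" "\<And>U. openin (mtopology_of m0) U \<Longrightarrow> U \<noteq> {} \<Longrightarrow>
     (\<exists>x\<in>U. \<exists>y\<in>U. thick {n. mdist m0 ((T0 ^^ n) x) ((T0 ^^ n) y) > d})"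
    using t unfolding strongly_Ft_sensitive_def by blast
  show ?thesis unfolding strongly_Ft_sensitive_def
  proof (intro exI conjI allI impI)
    show "d > 0" by fact
    fix U assume U: "openin (mtopology_of m1) U \<and> U \<noteq> {}"
    then obtain V where V: "openin (mtopology_of m0) V" "U = e ` V" using conjm_open[OF c] by blast
    have Vs: "V \<subseteq> mspace m0" using V(1) openin_subset by fastforce
    have "V \<noteq> {}" using U V by blast
    then obtain x y where xy: "x \<in> V" "y \<in> V" "thick {n. mdist m0 ((T0 ^^ n) x) ((T0 ^^ n) y) > d}"
      using d V by blast
    have xs: "x \<in> mspace m0" "y \<in> mspace m0" using xy Vs by auto
    have eqn: "mdist m1 ((T1 ^^ n) (e x)) ((T1 ^^ n) (e y)) = mdist m0 ((T0 ^^ n) x) ((T0 ^^ n) y)" for n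
      using conjm_iter[OF c xs(1), of n] conjm_iter[OF c xs(2), of n] conjmD(2)[OF c] by simp
    show "\<exists>x\<in>U. \<exists>y\<in>U. thick {n. mdist m1 ((T1 ^^ n) x) ((T1 ^^ n) y) > d}"
    proof (intro bexI)
      show "thick {n. mdist m1 ((T1 ^^ n) (e x)) ((T1 ^^ n) (e y)) > d}" using xy(3) eqn by simp
      show "e x \<in> U" "e y \<in> U" using xy V by auto
    qed
  qed
qed



lemma step_lemma_pos:
  fixes phi psi :: real assumes ph: "phi > 0"
  shows "\<exists>n k. a \<le> n \<and> n \<le> a + nat \<lfloor>2*pi/phi\<rfloor> \<and> \<bar>real n * phi + psi - 2*pi * of_int k\<bar> \<le> phi"
proof -
  define x0 where "x0 = real a * phi + psi"
  define k where "k = \<lceil>x0/(2*pi)\<rceil>"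
  have cc: "of_int k - 1 < x0/(2*pi)" "x0/(2*pi) \<le> of_int k"
    using ceiling_correct[of "x0/(2*pi)"] unfolding k_def by auto
  have k1: "x0 \<le> 2*pi*k"
    using cc(2) pi_gt_zero by (simp add: field_simps)
  have k2: "2*pi*k < x0 + 2*pi"
    using cc(1) pi_gt_zero by (simp add: field_simps)
  define y where "y = (2*pi*k - x0)/phi"
  have y0: "y \<ge> 0" using k1 ph unfolding y_def by simp
  have y1: "y < 2*pi/phi" using k2 ph unfolding y_def by (simp add: divide_strict_right_mono)
  define j where "j = nat \<lfloor>y\<rfloor>"
  have j: "real j = of_int \<lfloor>y\<rfloor>" using y0 unfolding j_def by simp
  have j1: "real j \<le> y" "y < real j + 1" using j by linarith+
  have j2: "j \<le> nat \<lfloor>2*pi/phi\<rfloor>" unfolding j_def using y1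
    by (meson floor_mono less_imp_le nat_mono)
  have e1: "real (a + j) * phi + psi = x0 + real j * phi" unfolding x0_def by (simp add: algebra_simps)
  have "real j * phi \<le> y * phi" using j1 ph by (simp add: mult_right_mono)
  moreover have "y * phi = 2*pi*k - x0" unfolding y_def using ph by simp
  moreover have "(y - 1) * phi < real j * phi" using j1 ph by (simp add: mult_strict_right_mono)
  ultimately have "\<bar>real (a + j) * phi + psi - 2*pi * of_int k\<bar> \<le> phi"
    unfolding e1 by (simp add: algebra_simps abs_if)
  then show ?thesis using j2 by (intro exI[of _ "a+j"] exI[of _ k]) auto
qed

lemma step_lemma:
  fixes phi psi :: real assumes ph: "phi \<noteq> 0"
  shows "\<exists>n k. a \<le> n \<and> n \<le> a + nat \<lfloor>2*pi/\<bar>phi\<bar>\<rfloor> \<and> \<bar>real n * phi + psi - 2*pi * of_int k\<bar> \<le> \<bar>phi\<bar>"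
proof (cases "phi > 0")
  case True then show ?thesis using step_lemma_pos[of phi a psi] by simp
next
  case False
  then have p: "-phi > 0" using ph by simp
  obtain n k where nk: "a \<le> n" "n \<le> a + nat \<lfloor>2*pi/(-phi)\<rfloor>" "\<bar>real n * (-phi) + (-psi) - 2*pi * of_int k\<bar> \<le> -phi"
    using step_lemma_pos[OF p, of a "-psi"] by blast
  have "\<bar>real n * phi + psi - 2*pi * of_int (-k)\<bar> = \<bar>real n * (-phi) + (-psi) - 2*pi * of_int k\<bar>"
    by (simp add: abs_if algebra_simps)
  then show ?thesis using nk False by (intro exI[of _ n] exI[of _ "-k"]) auto
qed

lemma norm_cis_minus1_sq: "(norm (cis y - 1))^2 = 2 - 2 * cos y"
proof -
  have "cis y - 1 = Complex (cos y - 1) (sin y)" by (simp add: complex_eq_iff)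
  then have "(norm (cis y - 1))^2 = (cos y - 1)^2 + (sin y)^2" by (simp add: cmod_power2)
  also have "\<dots> = 2 - 2 * cos y" by (simp add: power2_diff)
  finally show ?thesis .
qed

lemma norm_cis_minus1_le: "norm (cis y - 1) \<le> \<bar>y\<bar>"
proof -
  have "cos y = 1 - 2 * sin (y/2) ^ 2" using cos_double_sin[of "y/2"] by simp
  then have "(norm (cis y - 1))^2 = 4 * sin (y/2) ^ 2" using norm_cis_minus1_sq by simp
  also have "\<dots> \<le> 4 * (y/2)^2"
  proof -
    have "(sin (y/2))^2 \<le> (y/2)^2" using abs_sin_x_le_abs_x[of "y/2"] abs_le_square_iff by blast
    then show ?thesis by simp
  qed
  also have "\<dots> = \<bar>y\<bar>^2" by (simp add: power2_eq_square)
  finally have "(norm (cis y - 1))^2 \<le> \<bar>y\<bar>^2" .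
  then show ?thesis using power2_le_imp_le abs_ge_zero by blast
qed

lemma cis_shift: "cis (y - 2*pi * of_int k) = cis y"
proof -
  have "cis (y - 2*pi * of_int k) = cis y * cis (- (2*pi * of_int k))" by (simp add: cis_mult)
  also have "cis (- (2*pi * of_int k)) = 1"
    using cis_multiple_2pi[of "of_int (-k)"] by simp
  finally show ?thesis by simp
qed

lemma unit_cis: "norm (u::complex) = 1 \<Longrightarrow> cis (Arg u) = u"
proof -
  assume u: "norm u = 1"
  then have "u \<noteq> 0" by auto
  then show ?thesis using u by (simp add: cis_Arg sgn_div_norm)
qed

lemma pow_close:
  fixes u v :: complex assumes u: "norm u = 1" and v: "norm v = 1" and A: "Arg u \<noteq> 0"
  shows "\<exists>n. a \<le> n \<and> n \<le> a + nat \<lfloor>2*pi/\<bar>Arg u\<bar>\<rfloor> \<and> norm (u^n * v - 1) \<le> \<bar>Arg u\<bar>"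
proof -
  obtain n k where nk: "a \<le> n" "n \<le> a + nat \<lfloor>2*pi/\<bar>Arg u\<bar>\<rfloor>"
     "\<bar>real n * Arg u + Arg v - 2*pi * of_int k\<bar> \<le> \<bar>Arg u\<bar>"
    using step_lemma[OF A, of a "Arg v"] by blast
  have "u^n * v = cis (real n * Arg u + Arg v)"
  proof -
    have "u^n * v = (cis (Arg u))^n * cis (Arg v)" using unit_cis[OF u] unit_cis[OF v] by simp
    also have "\<dots> = cis (real n * Arg u) * cis (Arg v)" by (simp only: Complex.DeMoivre)
    also have "\<dots> = cis (real n * Arg u + Arg v)" by (simp add: cis_mult)
    finally show ?thesis .
  qed
  also have "\<dots> = cis (real n * Arg u + Arg v - 2*pi * of_int k)" by (simp add: cis_shift)
  finally have "norm (u^n * v - 1) \<le> \<bar>real n * Arg u + Arg v - 2*pi * of_int k\<bar>"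
    using norm_cis_minus1_le by simp
  then show ?thesis using nk by (intro exI[of _ n]) auto
qed

lemma Arg_small:
  fixes u :: complex assumes u: "norm u = 1" and eta: "0 < eta" "eta \<le> pi"
    and close: "norm (u - 1) < norm (cis eta - 1)"
  shows "\<bar>Arg u\<bar> < eta"
proof (rule ccontr)
  assume "\<not> \<bar>Arg u\<bar> < eta"
  then have ge: "eta \<le> \<bar>Arg u\<bar>" by simp
  have le: "\<bar>Arg u\<bar> \<le> pi" using Arg_bounded[of u] by linarith
  have "cos \<bar>Arg u\<bar> \<le> cos eta" using cos_monotone_0_pi_le[of eta "\<bar>Arg u\<bar>"] ge le eta by simp
  then have "cos (Arg u) \<le> cos eta" by (cases "Arg u < 0") (simp_all add: abs_if)
  moreover have "(norm (u - 1))^2 = 2 - 2 * cos (Arg u)"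
    by (metis unit_cis[OF u] norm_cis_minus1_sq)
  ultimately have "(norm (cis eta - 1))^2 \<le> (norm (u - 1))^2"
    using norm_cis_minus1_sq[of eta] by linarith
  then have "norm (cis eta - 1) \<le> norm (u - 1)" using power2_le_imp_le norm_ge_zero by blast
  then show False using close by simp
qed

lemma cis_ne1: "0 < eta \<Longrightarrow> eta \<le> pi \<Longrightarrow> norm (cis eta - 1) > 0"
proof -
  assume e: "0 < eta" "eta \<le> pi"
  have "cos eta < 1"
    using e cos_monotone_0_pi[of 0 eta] by simp
  then have "(norm (cis eta - 1))^2 > 0" using norm_cis_minus1_sq[of eta] by simp
  then show ?thesis by (simp add: zero_less_power2)
qed



definition Cc :: "complex set" where "Cc = sphere 0 1"
definition Xs :: "(complex \<times> complex) set" where "Xs = Cc \<times> Cc"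
definition alpha :: real where "alpha = (SOME a. a \<notin> \<rat>)"
definition lam :: complex where "lam = cis (2*pi*alpha)"
definition Tm :: "complex \<times> complex \<Rightarrow> complex \<times> complex" where
  "Tm p = (lam * fst p, fst p * snd p)"
fun cf :: "nat \<Rightarrow> complex" where
  "cf 0 = 1" | "cf (Suc n) = lam^n * cf n"
definition m0 :: "(complex \<times> complex) metric" where "m0 = submetric euclidean_metric Xs"

lemma norm_lam [simp]: "norm lam = 1" unfolding lam_def by simp

lemma norm_cf [simp]: "norm (cf n) = 1"
  by (induction n) (simp_all add: norm_mult norm_power)

lemma iterT: "(Tm^^n) (z,w) = (lam^n * z, cf n * z^n * w)"
  by (induction n) (simp_all add: Tm_def algebra_simps)

lemma in_Cc [simp]: "z \<in> Cc \<longleftrightarrow> norm z = 1" unfolding Cc_def by simp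

lemma in_Xs: "p \<in> Xs \<longleftrightarrow> norm (fst p) = 1 \<and> norm (snd p) = 1"
  unfolding Xs_def by (cases p) simp

lemma mspace_m0 [simp]: "mspace m0 = Xs" unfolding m0_def by simp
lemma mdist_m0 [simp]: "mdist m0 = dist" unfolding m0_def by simp
lemma mtop_m0: "mtopology_of m0 = top_of_set Xs"
  unfolding m0_def by (simp add: mtopology_of_submetric)

lemma Tm_in: "p \<in> Xs \<Longrightarrow> Tm p \<in> Xs"
  unfolding in_Xs Tm_def by (simp add: norm_mult)

lemma iter_in: "p \<in> Xs \<Longrightarrow> (Tm^^n) p \<in> Xs"
  by (induction n) (simp_all add: Tm_in)

lemma compact_Xs: "compact Xs"
  unfolding Xs_def Cc_def by (intro compact_Times compact_sphere)

lemma closed_Xs: "closed Xs" using compact_Xs compact_imp_closed by blast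

lemma cont_Tm: "continuous_on UNIV Tm"
  unfolding Tm_def by (intro continuous_intros)

lemma tds_m0: "tds m0 Tm"
  unfolding tds_def mtop_m0
proof (intro conjI)
  show "compact_space (top_of_set Xs)"
    using compact_Xs by (simp add: compact_space_subtopology)
  show "continuous_map (top_of_set Xs) (top_of_set Xs) Tm"
    using cont_Tm Tm_in by (auto intro: continuous_on_subset)
  show "Tm ` mspace m0 = mspace m0"
  proof
    show "Tm ` mspace m0 \<subseteq> mspace m0" using Tm_in by auto
    show "mspace m0 \<subseteq> Tm ` mspace m0"
    proof
      fix p assume p: "p \<in> mspace m0"
      obtain z w where zw: "p = (z,w)" by (cases p)
      have nz: "norm z = 1" "norm w = 1" using p zw in_Xs by auto
      have l0: "lam \<noteq> 0" by (metis norm_lam norm_zero zero_neq_one)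
      define q where "q = (z / lam, w / (z / lam))"
      have z0: "z \<noteq> 0" using nz by auto
      have "q \<in> Xs" unfolding q_def in_Xs using nz by (simp add: norm_divide norm_mult)
      moreover have "Tm q = p" unfolding q_def Tm_def zw using l0 z0 by simp
      ultimately show "p \<in> Tm ` mspace m0" by force
    qed
  qed
qed

lemma sqrt_sum_le: "a \<ge> 0 \<Longrightarrow> b \<ge> 0 \<Longrightarrow> sqrt (a^2 + b^2) \<le> a + (b::real)"
proof -
  assume ab: "a \<ge> 0" "b \<ge> 0"
  have "a^2 + b^2 \<le> (a+b)^2" using ab by (simp add: power2_sum)
  then have "sqrt (a^2 + b^2) \<le> sqrt ((a+b)^2)" by (rule real_sqrt_le_mono)
  also have "\<dots> = a + b" using ab by simp
  finally show ?thesis .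
qed

lemma dist_pair_le: "dist (a::complex,b) (c,d) \<le> dist a c + dist b d"
  unfolding dist_Pair_Pair by (rule sqrt_sum_le) auto

lemma norm_Xs_le: "p \<in> Xs \<Longrightarrow> norm p \<le> 2"
proof -
  assume p: "p \<in> Xs"
  obtain z w where zw: "p = (z,w)" by (cases p)
  have "norm p \<le> norm z + norm w" unfolding zw by (rule norm_Pair_le)
  then show ?thesis using p zw in_Xs by simp
qed

lemma dist_Xs_le: "p \<in> Xs \<Longrightarrow> q \<in> Xs \<Longrightarrow> dist p q \<le> 4"
proof -
  assume pq: "p \<in> Xs" "q \<in> Xs"
  have "dist p q \<le> norm p + norm q" by (simp add: dist_norm norm_triangle_ineq4)
  then show ?thesis using norm_Xs_le[OF pq(1)] norm_Xs_le[OF pq(2)] by simp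
qed

lemma mdiam_ge:
  assumes S: "S \<subseteq> Xs" and p: "p \<in> S" and q: "q \<in> S"
  shows "dist p q \<le> mdiam m0 S"
  unfolding mdiam_def
proof (rule cSup_upper)
  have "dist p q = mdist m0 p q" by simp
  then show "dist p q \<in> {mdist m0 x y |x y. x \<in> S \<and> y \<in> S}" using p q by blast
  show "bdd_above {mdist m0 x y |x y. x \<in> S \<and> y \<in> S}"
  proof (rule bdd_aboveI[of _ 4])
    fix r assume "r \<in> {mdist m0 x y |x y. x \<in> S \<and> y \<in> S}"
    then obtain x y where "x \<in> S" "y \<in> S" "r = dist x y" by auto
    then show "r \<le> 4" using S dist_Xs_le by blast
  qed
qed

lemma Ft_m0: "Ft_sensitive m0 Tm"
  unfolding Ft_sensitive_def mtop_m0
proof (intro exI[of _ 1] conjI allI impI)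
  show "(0::real) < 1" by simp
  fix U assume U: "openin (top_of_set Xs) U \<and> U \<noteq> {}"
  then obtain V where V: "open V" "U = Xs \<inter> V" by (auto simp: openin_open)
  obtain p where p: "p \<in> U" using U by blast
  obtain r where r: "r > 0" "ball p r \<subseteq> V" using V p open_contains_ball by blast
  obtain z0 w0 where zw: "p = (z0,w0)" by (cases p)
  have nz: "norm z0 = 1" "norm w0 = 1" using p V zw in_Xs by auto
  define N where "N = nat \<lceil>pi / r\<rceil> + 1"
  have sub: "{N..<N+k} \<subseteq> {n. n \<ge> 1 \<and> mdiam m0 ((Tm^^n) ` U) > 1}" for k
  proof
    fix n assume n: "n \<in> {N..<N+k}"
    then have nN: "n \<ge> N" by simp
    have n1: "n \<ge> 1" using nN N_def by simp
    have "pi / r \<le> real (nat \<lceil>pi / r\<rceil>)" by linarith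
    then have nbig: "pi / r < real n" using nN unfolding N_def by linarith
    define h where "h = pi / real n"
    have h0: "0 < h" unfolding h_def using n1 by simp
    have hr: "h < r" unfolding h_def using nbig r(1) n1
      by (simp add: divide_less_eq mult.commute pos_divide_less_eq)
    define q where "q = (z0 * cis h, w0)"
    have qX: "q \<in> Xs" unfolding q_def in_Xs using nz by (simp add: norm_mult)
    have "dist p q \<le> dist z0 (z0 * cis h) + dist w0 w0"
      unfolding zw q_def by (rule dist_pair_le)
    also have "\<dots> = norm (z0 * (1 - cis h))" by (simp add: dist_norm algebra_simps)
    also have "\<dots> = norm (cis h - 1)" using nz by (simp add: norm_mult norm_minus_commute)
    also have "\<dots> \<le> h" using norm_cis_minus1_le[of h] h0 by simp
    finally have "dist p q < r" using hr by simp
    then have qU: "q \<in> U" using r V qX by auto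
    have pX: "p \<in> Xs" using p V by auto
    have ch: "(cis h)^n = -1"
    proof -
      have "(cis h)^n = cis (real n * h)" by (simp only: Complex.DeMoivre)
      also have "real n * h = pi" unfolding h_def using n1 by simp
      finally show ?thesis by simp
    qed
    have Tq: "(Tm^^n) q = (lam^n * (z0 * cis h), - (cf n * z0^n * w0))"
      unfolding q_def iterT by (simp add: power_mult_distrib ch)
    have Tp: "(Tm^^n) p = (lam^n * z0, cf n * z0^n * w0)" unfolding zw iterT ..
    have "2 = norm (2 * (cf n * z0^n * w0))" using nz by (simp add: norm_mult norm_power)
    also have "\<dots> = dist (snd ((Tm^^n) p)) (snd ((Tm^^n) q))" unfolding Tp Tq by (simp add: dist_norm algebra_simps)
    also have "\<dots> \<le> dist ((Tm^^n) p) ((Tm^^n) q)" by (rule dist_snd_le)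
    also have "\<dots> \<le> mdiam m0 ((Tm^^n) ` U)"
      by (rule mdiam_ge) (use p qU V iter_in in auto)
    finally show "n \<in> {n. n \<ge> 1 \<and> mdiam m0 ((Tm^^n) ` U) > 1}" using n1 by simp
  qed
  show "thick {n. n \<ge> 1 \<and> mdiam m0 ((Tm^^n) ` U) > 1}"
    unfolding thick_def using sub by blast
qed



lemma not_strong_m0: "\<not> strongly_Ft_sensitive m0 Tm"
proof
  assume "strongly_Ft_sensitive m0 Tm"
  then obtain d where d: "d > 0" "\<And>U. openin (top_of_set Xs) U \<Longrightarrow> U \<noteq> {} \<Longrightarrow>
      \<exists>x\<in>U. \<exists>y\<in>U. thick {n. dist ((Tm^^n) x) ((Tm^^n) y) > d}"
    unfolding strongly_Ft_sensitive_def mtop_m0 by auto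
  define eta where "eta = min (d/2) pi"
  have eta: "0 < eta" "eta \<le> pi" "eta \<le> d/2" unfolding eta_def using d(1) by auto
  define r0 where "r0 = min (d/2) (norm (cis eta - 1))"
  have r0: "r0 > 0" "r0 \<le> d/2" "r0 \<le> norm (cis eta - 1)"
    unfolding r0_def using cis_ne1[OF eta(1,2)] d(1) by auto
  define U where "U = Xs \<inter> ball (1,1) (r0/2)"
  have Uo: "openin (top_of_set Xs) U" unfolding U_def by (rule openin_open_Int) simp
  have "(1,1) \<in> U" unfolding U_def using r0 by (simp add: in_Xs)
  then obtain x y where xy: "x \<in> U" "y \<in> U" "thick {n. dist ((Tm^^n) x) ((Tm^^n) y) > d}"
    using d(2)[OF Uo] by blast
  obtain z w where x: "x = (z,w)" by (cases x)
  obtain z' w' where y: "y = (z',w')" by (cases y)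
  have nz: "norm z = 1" "norm w = 1" "norm z' = 1" "norm w' = 1"
    using xy(1,2) x y unfolding U_def by (auto simp: in_Xs)
  have bx: "dist (1,1) x < r0/2" "dist (1,1) y < r0/2" using xy(1,2) unfolding U_def by auto
  have "dist z z' \<le> dist z 1 + dist 1 z'" by (rule dist_triangle)
  also have "dist z 1 \<le> dist x (1,1)" using dist_fst_le[of x "(1,1)"] x by simp
  also have "dist 1 z' \<le> dist (1,1) y" using dist_fst_le[of "(1,1)" y] y by simp
  finally have zz: "dist z z' < r0" using bx by (simp add: dist_commute)
  have "dist w w' \<le> dist w 1 + dist 1 w'" by (rule dist_triangle)
  also have "dist w 1 \<le> dist x (1,1)" using dist_snd_le[of x "(1,1)"] x by simp
  also have "dist 1 w' \<le> dist (1,1) y" using dist_snd_le[of "(1,1)" y] y by simp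
  finally have ww: "dist w w' < r0" using bx by (simp add: dist_commute)
  have z'0: "z' \<noteq> 0" "w' \<noteq> 0" using nz by auto
  define u where "u = z / z'"
  define v where "v = w / w'"
  have nu: "norm u = 1" "norm v = 1" unfolding u_def v_def using nz by (simp_all add: norm_divide)
  have zu: "z = z' * u" "w = w' * v" unfolding u_def v_def using z'0 by auto
  have key: "dist ((Tm^^n) x) ((Tm^^n) y) \<le> dist z z' + norm (u^n * v - 1)" for n
  proof -
    have "dist ((Tm^^n) x) ((Tm^^n) y) \<le> dist (lam^n * z) (lam^n * z') + dist (cf n * z^n * w) (cf n * z'^n * w')"
      unfolding x y iterT by (rule dist_pair_le)
    also have "dist (lam^n * z) (lam^n * z') = dist z z'"
      by (simp add: dist_norm norm_mult norm_power flip: right_diff_distrib)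
    also have "dist (cf n * z^n * w) (cf n * z'^n * w') = norm (u^n * v - 1)"
    proof -
      have "cf n * z^n * w - cf n * z'^n * w' = (cf n * z'^n * w') * (u^n * v - 1)"
        unfolding zu by (simp add: algebra_simps power_mult_distrib)
      then show ?thesis using nz by (simp add: dist_norm norm_mult norm_power)
    qed
    finally show ?thesis .
  qed
  show False
  proof (cases "Arg u = 0")
    case True
    have "u = 1" using unit_cis[OF nu(1)] True by simp
    then have small: "dist ((Tm^^n) x) ((Tm^^n) y) < d" for n
    proof -
      assume u1: "u = 1"
      have "dist w w' = norm (w' * (v - 1))" unfolding dist_norm zu(2) by (simp add: algebra_simps)
      also have "\<dots> = norm (v - 1)" using nz by (simp add: norm_mult)
      finally have "norm (u^n * v - 1) = dist w w'" unfolding u1 by simp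
      then show ?thesis using key[of n] zz ww r0 by linarith
    qed
    obtain a where "{a..<a+1} \<subseteq> {n. dist ((Tm^^n) x) ((Tm^^n) y) > d}"
      using xy(3) unfolding thick_def by blast
    then have "dist ((Tm^^a) x) ((Tm^^a) y) > d" by auto
    then show False using small[of a] by simp
  next
    case False
    have "dist z z' = norm (z' * (u - 1))" unfolding dist_norm zu(1) by (simp add: algebra_simps)
    also have "\<dots> = norm (u - 1)" using nz by (simp add: norm_mult)
    finally have "norm (u - 1) = dist z z'" by simp
    then have "norm (u - 1) < norm (cis eta - 1)" using zz r0 by linarith
    then have aeta: "\<bar>Arg u\<bar> < eta" using Arg_small[OF nu(1) eta(1,2)] by blast
    obtain a where a: "{a..<a + (nat \<lfloor>2*pi/\<bar>Arg u\<bar>\<rfloor> + 1)} \<subseteq> {n. dist ((Tm^^n) x) ((Tm^^n) y) > d}"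
      using xy(3) unfolding thick_def by blast
    obtain n where n: "a \<le> n" "n \<le> a + nat \<lfloor>2*pi/\<bar>Arg u\<bar>\<rfloor>" "norm (u^n * v - 1) \<le> \<bar>Arg u\<bar>"
      using pow_close[OF nu False, of a] by blast
    have "n \<in> {a..<a + (nat \<lfloor>2*pi/\<bar>Arg u\<bar>\<rfloor> + 1)}" using n by auto
    then have "dist ((Tm^^n) x) ((Tm^^n) y) > d" using a by auto
    moreover have "dist ((Tm^^n) x) ((Tm^^n) y) < d" using key[of n] n(3) aeta eta zz r0 by linarith
    ultimately show False by simp
  qed
qed



lemma alpha_irr: "alpha \<notin> \<rat>"
proof -
  have "\<exists>a::real. a \<notin> \<rat>"
  proof (rule ccontr)
    assume "\<not> (\<exists>a::real. a \<notin> \<rat>)"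
    then have "\<rat> = (UNIV::real set)" by auto
    then show False using countable_rat uncountable_UNIV_real by metis
  qed
  then show ?thesis unfolding alpha_def by (rule someI_ex)
qed

lemma lam_pow_ne1: "n \<ge> 1 \<Longrightarrow> lam^n \<noteq> 1"
proof
  assume n: "n \<ge> 1" and e: "lam^n = 1"
  have "lam^n = cis (real n * (2*pi*alpha))" unfolding lam_def by (simp only: Complex.DeMoivre)
  then have "exp (\<i> * complex_of_real (real n * (2*pi*alpha))) = 1" using e by (simp add: cis_conv_exp)
  then obtain k :: int where k: "real n * (2*pi*alpha) = of_int (2*k) * pi"
    unfolding exp_eq_1 by auto
  then have "alpha = of_int k / real n" using n by (simp add: field_simps)
  then have "alpha \<in> \<rat>" by (metis Rats_divide Rats_of_int Rats_of_nat)
  with alpha_irr show False by simp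
qed

lemma compact_close_pair:
  fixes f :: "nat \<Rightarrow> 'a::metric_space"
  assumes K: "compact K" and f: "\<And>n. f n \<in> K" and e: "e > 0"
  shows "\<exists>i j. i < j \<and> dist (f i) (f j) < e"
proof -
  obtain l r where lr: "strict_mono r" "(f \<circ> r) \<longlonglongrightarrow> l"
    using compact_imp_seq_compact[OF K] f unfolding seq_compact_def by metis
  then have "Cauchy (f \<circ> r)" using LIMSEQ_imp_Cauchy by blast
  then obtain M where M: "\<forall>m\<ge>M. \<forall>n\<ge>M. dist ((f \<circ> r) m) ((f \<circ> r) n) < e"
    using e unfolding Cauchy_def by blast
  then have "dist (f (r M)) (f (r (Suc M))) < e" by simp
  moreover have "r M < r (Suc M)" using lr(1) unfolding strict_mono_def by simp
  ultimately show ?thesis by blast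
qed

lemma unit_cnj: "norm (t::complex) = 1 \<Longrightarrow> t * cnj t = 1"
  by (metis complex_norm_square mult.commute of_real_1 power_one)

lemma powers_approx:
  assumes g: "norm g = 1" "Arg g \<noteq> 0" "\<bar>Arg g\<bar> < e" and t: "norm t = 1"
  shows "\<exists>n. norm (g^n - t) < e"
proof -
  have nt: "norm (cnj t) = 1" using t by simp
  obtain n where n: "norm (g^n * cnj t - 1) \<le> \<bar>Arg g\<bar>"
    using pow_close[OF g(1) nt g(2), of 0] by auto
  have "g^n - t = t * (g^n * cnj t - 1)"
    using unit_cnj[OF t] by (simp add: algebra_simps)
  then have "norm (g^n - t) = norm (g^n * cnj t - 1)" using t by (simp add: norm_mult)
  then show ?thesis using n g(3) by (intro exI[of _ n]) linarith
qed

lemma small_Arg: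
  assumes g: "norm g = 1" "g \<noteq> 1" and e: "e > 0"
    and c: "norm (g - 1) < norm (cis (min e pi) - 1)"
  shows "Arg g \<noteq> 0 \<and> \<bar>Arg g\<bar> < e"
proof
  show "Arg g \<noteq> 0"
  proof
    assume "Arg g = 0"
    then have "g = cis 0" using unit_cis[OF g(1)] by simp
    then show False using g(2) by simp
  qed
  have "\<bar>Arg g\<bar> < min e pi" using Arg_small[OF g(1) _ _ c] e by simp
  then show "\<bar>Arg g\<bar> < e" by simp
qed

lemma cis_min_pos: "e > 0 \<Longrightarrow> norm (cis (min e pi) - 1) > 0"
  by (rule cis_ne1) auto

lemma dense_from_small:
  assumes G: "G \<subseteq> Cc" "closed G" "\<And>g n. g \<in> G \<Longrightarrow> g^n \<in> G"
    and small: "\<And>e. e > 0 \<Longrightarrow> \<exists>g\<in>G. g \<noteq> 1 \<and> norm (g - 1) < e"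
  shows "G = Cc"
proof
  show "G \<subseteq> Cc" by fact
  show "Cc \<subseteq> G"
  proof
    fix t assume t: "t \<in> Cc"
    have "\<forall>e>0. \<exists>y\<in>G. dist y t < e"
    proof (intro allI impI)
      fix e :: real assume e: "e > 0"
      obtain g where g: "g \<in> G" "g \<noteq> 1" "norm (g - 1) < norm (cis (min e pi) - 1)"
        using small[OF cis_min_pos[OF e]] by blast
      have ng: "norm g = 1" using g(1) G(1) by auto
      have A: "Arg g \<noteq> 0 \<and> \<bar>Arg g\<bar> < e" using small_Arg[OF ng g(2) e g(3)] .
      obtain n where "norm (g^n - t) < e" using powers_approx[OF ng _ _, of e t] A t by auto
      then show "\<exists>y\<in>G. dist y t < e" using G(3)[OF g(1), of n] by (auto simp: dist_norm)
    qed
    then show "t \<in> G" using closed_approachable[OF G(2)] by blast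
  qed
qed

lemma lam_dense:
  assumes z0: "norm z0 = 1" and t: "norm t = 1" and e: "e > 0"
  shows "\<exists>n. norm (lam^n * z0 - t) < e"
proof -
  obtain i j where ij: "i < j" "dist (lam^i) (lam^j) < norm (cis (min e pi) - 1)"
    using compact_close_pair[of Cc "\<lambda>n. lam^n", OF _ _ cis_min_pos[OF e]]
    by (auto simp: Cc_def norm_power)
  define g where "g = lam^(j-i)"
  have lj: "lam^j = lam^i * g" unfolding g_def using ij(1) by (simp add: power_add[symmetric])
  have ng: "norm g = 1" unfolding g_def by (simp add: norm_power)
  have g1: "g \<noteq> 1" unfolding g_def using lam_pow_ne1[of "j-i"] ij(1) by simp
  have "dist (lam^i) (lam^j) = norm (g - 1)"
  proof -
    have "lam^i - lam^j = lam^i * (1 - g)" unfolding lj by (simp add: algebra_simps)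
    then show ?thesis by (simp add: dist_norm norm_mult norm_power norm_minus_commute)
  qed
  then have A: "Arg g \<noteq> 0 \<and> \<bar>Arg g\<bar> < e" using small_Arg[OF ng g1 e] ij(2) by simp
  have nt: "norm (t * cnj z0) = 1" using t z0 by (simp add: norm_mult)
  obtain n where n: "norm (g^n - t * cnj z0) < e" using powers_approx[OF ng _ _ nt] A by blast
  have gp: "lam^((j-i)*n) = g^n" unfolding g_def by (simp add: power_mult)
  have "lam^((j-i)*n) * z0 - t = z0 * (g^n - t * cnj z0)"
    unfolding gp using unit_cnj[OF z0] by (simp add: algebra_simps)
  then have "norm (lam^((j-i)*n) * z0 - t) = norm (g^n - t * cnj z0)" using z0 by (simp add: norm_mult)
  then show ?thesis using n by metis
qed



lemma exp1_const:
  fixes h :: "real \<Rightarrow> complex"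
  assumes c: "continuous_on UNIV h" and e: "\<And>x. exp (h x) = 1"
  shows "h x = h 0"
proof -
  have "h constant_on UNIV"
  proof (rule continuous_discrete_range_constant[OF connected_UNIV c])
    fix x :: real assume "x \<in> UNIV"
    show "\<exists>e>0. \<forall>y. y \<in> UNIV \<and> h y \<noteq> h x \<longrightarrow> e \<le> norm (h y - h x)"
    proof (intro exI[of _ "2*pi"] conjI allI impI)
      show "(0::real) < 2 * pi" by simp
      fix y assume y: "y \<in> UNIV \<and> h y \<noteq> h x"
      obtain n :: int where n: "Re (h x) = 0" "Im (h x) = of_int (2*n) * pi"
        using e[of x] unfolding exp_eq_1 by blast
      obtain m :: int where m: "Re (h y) = 0" "Im (h y) = of_int (2*m) * pi"
        using e[of y] unfolding exp_eq_1 by blast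
      have "m \<noteq> n" using n m y by (metis complex_eqI)
      then have "1 \<le> \<bar>of_int m - of_int n :: real\<bar>" by linarith
      then have "2*pi \<le> 2*pi * \<bar>of_int m - of_int n :: real\<bar>" by simp
      also have "\<dots> = \<bar>Im (h y - h x)\<bar>"
      proof -
        have "Im (h y - h x) = 2*pi*(of_int m - of_int n)" using n m by (simp add: algebra_simps)
        then show ?thesis by (simp add: abs_mult)
      qed
      also have "\<dots> \<le> norm (h y - h x)" by (rule abs_Im_le_cmod)
      finally show "2*pi \<le> norm (h y - h x)" .
    qed
  qed
  then show ?thesis unfolding constant_on_def by auto
qed

lemma no_twisted_map:
  assumes contF: "continuous_on Cc F" and FC: "F ` Cc \<subseteq> Cc"
    and feq: "\<And>z. z \<in> Cc \<Longrightarrow> F (cis b * z) = z^q * F z" and q: "q \<ge> 1"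
  shows False
proof -
  define g where "g t = F (cis t)" for t
  have cg: "continuous_on UNIV g"
    unfolding g_def by (rule continuous_on_compose2[OF contF]) (auto intro: continuous_intros simp: Cc_def)
  have gC: "g t \<in> Cc" for t
  proof -
    have "cis t \<in> Cc" by simp
    then show ?thesis unfolding g_def using FC by blast
  qed
  have g0: "g t \<noteq> 0" for t using gC[of t] by auto
  have "Borsukian (UNIV :: real set)" by (rule convex_imp_Borsukian) simp
  then obtain G where G: "continuous_on UNIV G" "\<And>t. g t = exp (G t)"
    unfolding Borsukian_continuous_logarithm using cg g0 by blast
  define D where "D t = G (t + 2*pi) - G t" for t
  define E where "E t = G (t + b) - G t - \<i> * of_real (real q * t)" for t
  have cD: "continuous_on UNIV D" unfolding D_def
    by (intro continuous_intros continuous_on_compose2[OF G(1)]) auto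
  have cE: "continuous_on UNIV E" unfolding E_def
    by (intro continuous_intros continuous_on_compose2[OF G(1)]) auto
  have eD: "exp (D t) = 1" for t
  proof -
    have "exp (D t) = g (t + 2*pi) / g t" unfolding D_def G(2) by (simp add: exp_diff)
    also have "g (t + 2*pi) = g t" unfolding g_def by (simp add: cis_mult[symmetric])
    finally show ?thesis using g0[of t] by simp
  qed
  have eE: "exp (E t) = 1" for t
  proof -
    have "g (t + b) = cis (real q * t) * g t"
    proof -
      have "g (t + b) = F (cis b * cis t)" unfolding g_def by (simp add: cis_mult add.commute)
      also have "\<dots> = (cis t)^q * F (cis t)" by (rule feq) (simp add: Cc_def)
      also have "(cis t)^q = cis (real q * t)" by (simp only: Complex.DeMoivre)
      finally show ?thesis unfolding g_def .
    qed
    moreover have "exp (\<i> * of_real (real q * t)) = cis (real q * t)" by (simp add: cis_conv_exp)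
    ultimately have "exp (E t) = (cis (real q * t) * g t) / (g t * cis (real q * t))"
      unfolding E_def G(2) by (simp add: exp_diff)
    also have "\<dots> = 1" using g0[of t] by (simp add: cis_neq_zero)
    finally show ?thesis .
  qed
  have Dc: "D t = D 0" for t using exp1_const[OF cD eD] .
  have Ec: "E t = E 0" for t using exp1_const[OF cE eE] .
  have "G (b + 2*pi) = G b + D 0" using Dc[of b] unfolding D_def by (simp add: algebra_simps)
  also have "G b = G 0 + E 0" using Ec[of 0] unfolding E_def by (simp add: algebra_simps)
  finally have 1: "G (b + 2*pi) = G 0 + E 0 + D 0" .
  have "G (2*pi + b) = G (2*pi) + \<i> * of_real (real q * (2*pi)) + E 0"
    using Ec[of "2*pi"] unfolding E_def by (simp add: algebra_simps)
  also have "G (2*pi) = G 0 + D 0" using Dc[of 0] unfolding D_def by (simp add: algebra_simps)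
  finally have 2: "G (2*pi + b) = G 0 + D 0 + \<i> * of_real (real q * (2*pi)) + E 0" .
  have "\<i> * of_real (real q * (2*pi)) = 0" using 1 2 by (simp add: add.commute algebra_simps)
  then have "real q * (2*pi) = 0" by simp
  then show False using q by simp
qed



lemma exists_minimal:
  fixes f :: "'a::metric_space \<Rightarrow> 'a"
  assumes K: "compact K" "K \<noteq> {}" "f ` K \<subseteq> K"
  shows "\<exists>M. M \<subseteq> K \<and> M \<noteq> {} \<and> closed M \<and> f ` M \<subseteq> M \<and>
           (\<forall>N. N \<subseteq> M \<and> N \<noteq> {} \<and> closed N \<and> f ` N \<subseteq> N \<longrightarrow> N = M)"
proof -
  define A where "A = {N. N \<subseteq> K \<and> N \<noteq> {} \<and> closed N \<and> f ` N \<subseteq> N}"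
  define B where "B = (\<lambda>N. K - N) ` A"
  have KA: "K \<in> A" using K compact_imp_closed unfolding A_def by auto
  have inv: "\<And>N. N \<subseteq> K \<Longrightarrow> K - (K - N) = N" by auto
  have "\<exists>M\<in>B. \<forall>X\<in>B. M \<subseteq> X \<longrightarrow> X = M"
  proof (rule subset_Zorn_nonempty)
    show "B \<noteq> {}" using KA unfolding B_def by auto
    fix CC assume C: "CC \<noteq> {}" "subset.chain B CC"
    have CB: "CC \<subseteq> B" and Cch: "\<And>X Y. X \<in> CC \<Longrightarrow> Y \<in> CC \<Longrightarrow> X \<subseteq> Y \<or> Y \<subseteq> X"
      using C(2) unfolding subset_chain_def by auto
    define NN where "NN = (\<lambda>X. K - X) ` CC"
    have CK: "\<And>X. X \<in> CC \<Longrightarrow> X \<subseteq> K" using CB unfolding B_def by auto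
    have NA: "NN \<subseteq> A"
    proof
      fix N assume "N \<in> NN"
      then obtain X where X: "X \<in> CC" "N = K - X" unfolding NN_def by auto
      then obtain N0 where N0: "N0 \<in> A" "X = K - N0" using CB unfolding B_def by auto
      have "N0 \<subseteq> K" using N0(1) unfolding A_def by auto
      then have "N = N0" using X(2) N0(2) inv by simp
      then show "N \<in> A" using N0 by simp
    qed
    have NNne: "NN \<noteq> {}" using C(1) unfolding NN_def by auto
    have chN: "subset.chain A NN"
      unfolding subset_chain_def
    proof (intro conjI ballI)
      show "NN \<subseteq> A" by fact
      fix N1 N2 assume "N1 \<in> NN" "N2 \<in> NN"
      then obtain X1 X2 where "X1 \<in> CC" "X2 \<in> CC" "N1 = K - X1" "N2 = K - X2" unfolding NN_def by auto
      then show "N1 \<subseteq> N2 \<or> N2 \<subseteq> N1" using Cch[of X1 X2] by auto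
    qed
    have UC: "\<Union>CC = K - \<Inter>NN"
    proof
      show "\<Union>CC \<subseteq> K - \<Inter>NN"
      proof
        fix x assume "x \<in> \<Union>CC"
        then obtain X where X: "X \<in> CC" "x \<in> X" by auto
        then have "x \<in> K" using CK by auto
        moreover have "x \<notin> K - X" using X by auto
        ultimately show "x \<in> K - \<Inter>NN" using X(1) unfolding NN_def by auto
      qed
      show "K - \<Inter>NN \<subseteq> \<Union>CC"
      proof
        fix x assume x: "x \<in> K - \<Inter>NN"
        then have "x \<notin> \<Inter>NN" by simp
        then obtain N where N: "N \<in> NN" "x \<notin> N" by blast
        then obtain X where X: "X \<in> CC" "N = K - X" unfolding NN_def by blast
        then show "x \<in> \<Union>CC" using x N by auto
      qed
    qed
    have NK: "\<And>N. N \<in> NN \<Longrightarrow> N \<subseteq> K" using NA unfolding A_def by auto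
    have IA: "\<Inter>NN \<in> A"
      unfolding A_def
    proof (intro CollectI conjI)
      show "\<Inter>NN \<subseteq> K" using NK NNne by blast
      show "closed (\<Inter>NN)" using NA unfolding A_def by (intro closed_Inter) auto
      show "f ` \<Inter>NN \<subseteq> \<Inter>NN" using NA unfolding A_def by blast
      have "K \<inter> \<Inter>NN \<noteq> {}"
      proof (rule compact_imp_fip[OF K(1)])
        show "\<And>T. T \<in> NN \<Longrightarrow> closed T" using NA unfolding A_def by auto
        fix F' assume F': "finite F'" "F' \<subseteq> NN"
        show "K \<inter> \<Inter>F' \<noteq> {}"
        proof (cases "F' = {}")
          case True then show ?thesis using K(2) by simp
        next
          case False
          have FA: "F' \<subseteq> A" using F'(2) NA by (rule subset_trans)
          have "subset.chain A F'"
            unfolding subset_chain_def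
          proof (intro conjI ballI)
            show "F' \<subseteq> A" by fact
            fix X Y assume "X \<in> F'" "Y \<in> F'"
            then have "X \<in> NN" "Y \<in> NN" using F'(2) by (auto simp: subset_iff)
            then show "X \<subseteq> Y \<or> Y \<subseteq> X" using chN unfolding subset_chain_def by simp
          qed
          then have I1: "\<Inter>F' \<in> F'" by (rule Inter_in_chain[OF F'(1) False])
          have I2: "\<Inter>F' \<in> A" using I1 FA by (rule subsetD[rotated])
          then have "\<Inter>F' \<noteq> {}" "\<Inter>F' \<subseteq> K" unfolding A_def by auto
          then show ?thesis by (simp add: Int_absorb1)
        qed
      qed
      then show "\<Inter>NN \<noteq> {}" by blast
    qed
    show "\<Union>CC \<in> B" unfolding B_def UC using IA by blast
  qed
  then obtain M' where M': "M' \<in> B" "\<And>X. X \<in> B \<Longrightarrow> M' \<subseteq> X \<Longrightarrow> X = M'" by blast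
  then obtain M where M: "M \<in> A" "M' = K - M" unfolding B_def by auto
  have MK: "M \<subseteq> K" using M(1) unfolding A_def by auto
  show ?thesis
  proof (intro exI[of _ M] conjI allI impI)
    show "M \<subseteq> K" "M \<noteq> {}" "closed M" "f ` M \<subseteq> M" using M(1) unfolding A_def by auto
    fix N assume N: "N \<subseteq> M \<and> N \<noteq> {} \<and> closed N \<and> f ` N \<subseteq> N"
    then have NA: "N \<in> A" using MK unfolding A_def by auto
    have "K - N \<in> B" using NA unfolding B_def by auto
    moreover have "M' \<subseteq> K - N" using M(2) N by auto
    ultimately have "K - N = K - M" using M'(2) M(2) by blast
    then show "N = M" using inv[of N] inv[of M] MK N by auto
  qed
qed

definition St :: "complex \<Rightarrow> complex \<times> complex \<Rightarrow> complex \<times> complex" where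
  "St t p = (fst p, t * snd p)"

lemma St_linear: "linear (St t)"
  by (rule linearI) (auto simp: St_def algebra_simps)

lemma St_inj: "t \<noteq> 0 \<Longrightarrow> inj (St t)"
  unfolding inj_def St_def by (auto simp: prod_eq_iff)

lemma St_iter: "(Tm^^n) (St t p) = St t ((Tm^^n) p)"
  by (cases p) (simp add: St_def iterT algebra_simps)

lemma St_mult: "St s (St t p) = St (s*t) p"
  by (simp add: St_def algebra_simps)

lemma St_1: "St 1 p = p" by (simp add: St_def)



lemma iter_inv: "Tm ` M \<subseteq> M \<Longrightarrow> q \<in> M \<Longrightarrow> (Tm^^n) q \<in> M"
  by (induction n) auto

lemma minimal_full:
  assumes M: "M \<subseteq> Xs" "M \<noteq> {}" "closed M" "Tm ` M \<subseteq> M"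
    and mn: "\<And>N. N \<subseteq> M \<Longrightarrow> N \<noteq> {} \<Longrightarrow> closed N \<Longrightarrow> Tm ` N \<subseteq> N \<Longrightarrow> N = M"
  shows "M = Xs"
proof -
  have orbc: "closure (range (\<lambda>n. (Tm^^n) q)) = M" if q: "q \<in> M" for q
  proof (rule mn)
    let ?O = "range (\<lambda>n. (Tm^^n) q)"
    have OM: "?O \<subseteq> M" using iter_inv[OF M(4) q] by auto
    show "closure ?O \<subseteq> M" using OM M(3) by (rule closure_minimal)
    show "closure ?O \<noteq> {}" by simp
    show "closed (closure ?O)" by simp
    have "Tm ` ?O \<subseteq> ?O"
    proof
      fix x assume "x \<in> Tm ` ?O"
      then obtain n where "x = Tm ((Tm^^n) q)" by auto
      then have "x = (Tm^^(Suc n)) q" by simp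
      then show "x \<in> ?O" by blast
    qed
    then have "Tm ` ?O \<subseteq> closure ?O" using closure_subset by blast
    then show "Tm ` closure ?O \<subseteq> closure ?O"
      by (rule image_closure_subset[OF continuous_on_subset[OF cont_Tm] closed_closure, rotated]) simp
  qed
  have key: "St t ` M = M" if zw: "(z,w) \<in> M" "(z, t*w) \<in> M" and t: "norm t = 1" for z w t
  proof -
    have t0: "t \<noteq> 0" using t by auto
    have "St t (z,w) = (z, t*w)" by (simp add: St_def)
    have orb: "range (\<lambda>n. (Tm^^n) (z, t*w)) = St t ` range (\<lambda>n. (Tm^^n) (z,w))"
    proof -
      have "(Tm^^n) (z, t*w) = St t ((Tm^^n) (z,w))" for n
        using St_iter[of n t "(z,w)"] by (simp add: St_def)
      then show ?thesis by (auto simp: image_iff)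
    qed
    have "M = closure (range (\<lambda>n. (Tm^^n) (z, t*w)))" using orbc[OF zw(2)] by simp
    also have "\<dots> = St t ` closure (range (\<lambda>n. (Tm^^n) (z,w)))"
      unfolding orb using closure_injective_linear_image[OF St_linear St_inj[OF t0]] by simp
    also have "\<dots> = St t ` M" using orbc[OF zw(1)] by simp
    finally show ?thesis by simp
  qed
  obtain z0 w0 where q0: "(z0,w0) \<in> M" using M(2) by auto
  have nq0: "norm z0 = 1" "norm w0 = 1" using q0 M(1) by (auto simp: in_Xs)
  define H where "H = {t. norm t = 1 \<and> St t ` M = M}"
  have Hchar: "H = Cc \<inter> (\<lambda>t. (z0, t*w0)) -` M"
  proof
    show "H \<subseteq> Cc \<inter> (\<lambda>t. (z0, t*w0)) -` M"
    proof
      fix t assume "t \<in> H"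
      then have t: "norm t = 1" "St t ` M = M" unfolding H_def by auto
      have "St t (z0,w0) \<in> St t ` M" using q0 by blast
      then have "(z0, t*w0) \<in> M" using t(2) by (simp add: St_def)
      then show "t \<in> Cc \<inter> (\<lambda>t. (z0, t*w0)) -` M" using t by simp
    qed
    show "Cc \<inter> (\<lambda>t. (z0, t*w0)) -` M \<subseteq> H"
    proof
      fix t assume "t \<in> Cc \<inter> (\<lambda>t. (z0, t*w0)) -` M"
      then have t: "norm t = 1" "(z0,t*w0) \<in> M" by auto
      have "St t ` M = M" by (rule key[OF q0 t(2) t(1)])
      then show "t \<in> H" unfolding H_def using t(1) by simp
    qed
  qed
  have cp: "continuous_on UNIV (\<lambda>t::complex. (z0, t*w0))"
    by (intro continuous_on_Pair continuous_on_const continuous_on_mult continuous_on_id)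
  have Hclosed: "closed H" unfolding Hchar
    by (intro closed_Int closed_vimage M(3) cp) (simp add: Cc_def)
  have HC: "H \<subseteq> Cc" unfolding H_def by auto
  have Hmult: "s * t \<in> H" if "s \<in> H" "t \<in> H" for s t
  proof -
    have "St (s*t) ` M = St s ` St t ` M" by (simp add: image_image St_mult)
    then show ?thesis using that unfolding H_def by (simp add: norm_mult)
  qed
  have H1: "1 \<in> H" unfolding H_def by (simp add: St_1)
  have Hpow: "g^n \<in> H" if "g \<in> H" for g n
    using that by (induction n) (auto intro: Hmult H1)
  have Hcnj: "cnj t \<in> H" if "t \<in> H" for t
  proof -
    have t: "norm t = 1" "St t ` M = M" using that unfolding H_def by auto
    have "St (cnj t) ` M = St (cnj t) ` St t ` M" using t(2) by simp
    also have "\<dots> = St (cnj t * t) ` M" by (simp add: image_image St_mult)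
    also have "cnj t * t = 1" using unit_cnj[OF t(1)] by (simp add: mult.commute)
    finally show ?thesis using t unfolding H_def by (simp add: St_1)
  qed
  have compM: "compact M" using M(1,3) compact_Xs by (metis closed_Int_compact inf.absorb1)
  have proj: "z \<in> fst ` M" if z: "z \<in> Cc" for z
  proof -
    have cl: "closed (fst ` M)"
      using compact_continuous_image[OF continuous_on_fst[OF continuous_on_id] compM]
      by (simp add: compact_imp_closed)
    have "\<forall>e>0. \<exists>y\<in>fst ` M. dist y z < e"
    proof (intro allI impI)
      fix e :: real assume e: "e > 0"
      obtain n where n: "norm (lam^n * z0 - z) < e" using lam_dense[OF nq0(1) _ e, of z] z by auto
      have "(Tm^^n) (z0,w0) \<in> M" using iter_inv[OF M(4) q0] .
      then have inM: "lam^n * z0 \<in> fst ` M" by (force simp: iterT)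
      have "dist (lam^n * z0) z < e" using n by (simp add: dist_norm)
      then show "\<exists>y\<in>fst ` M. dist y z < e" using inM by blast
    qed
    then show ?thesis using closed_approachable[OF cl] by blast
  qed
  have fiber: "\<exists>w. (z,w) \<in> M" if "z \<in> Cc" for z
    using proj[OF that] by force
  show ?thesis
  proof (cases "\<forall>e>0. \<exists>h\<in>H. h \<noteq> 1 \<and> norm (h - 1) < e")
    case True
    have small: "\<And>e. e > 0 \<Longrightarrow> \<exists>h\<in>H. h \<noteq> 1 \<and> norm (h - 1) < e" using True by blast
    have HCc: "H = Cc" by (rule dense_from_small[OF HC Hclosed Hpow small])
    show ?thesis
    proof
      show "M \<subseteq> Xs" by fact
      show "Xs \<subseteq> M"
      proof
        fix p assume p: "p \<in> Xs"
        obtain z w where zw: "p = (z,w)" by (cases p)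
        have nz: "norm z = 1" "norm w = 1" using p zw by (auto simp: in_Xs)
        obtain w1 where w1: "(z,w1) \<in> M" using fiber[of z] nz by auto
        have nw1: "norm w1 = 1" using w1 M(1) by (auto simp: in_Xs)
        define t where "t = w * cnj w1"
        have "norm t = 1" unfolding t_def using nz nw1 by (simp add: norm_mult)
        then have "t \<in> H" using HCc by simp
        then have "St t ` M = M" unfolding H_def by simp
        moreover have "St t (z,w1) = (z,w)"
          unfolding St_def t_def using unit_cnj[OF nw1] by (simp add: mult.commute mult.left_commute)
        ultimately show "p \<in> M" using w1 zw by force
      qed
    qed
  next
    case False
    then obtain e where e: "e > 0" "\<And>h. h \<in> H \<Longrightarrow> h \<noteq> 1 \<Longrightarrow> e \<le> norm (h - 1)"
      by (auto simp: not_less)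
    have finH: "finite H"
    proof (rule ccontr)
      assume "infinite H"
      then obtain f :: "nat \<Rightarrow> complex" where f: "inj f" "range f \<subseteq> H"
        using infinite_countable_subset by blast
      have fC: "f n \<in> Cc" for n
      proof -
        have "f n \<in> H" using f(2) by blast
        then show ?thesis using HC by blast
      qed
      obtain i j where ij: "i < j" "dist (f i) (f j) < e"
        using compact_close_pair[of Cc f, OF _ fC e(1)] by (auto simp: Cc_def)
      have nfj: "norm (f j) = 1" using fC[of j] by simp
      define h where "h = f i * cnj (f j)"
      have "f i \<in> H" "f j \<in> H" using f(2) by blast+
      then have hH: "h \<in> H" unfolding h_def using Hcnj Hmult by blast
      have "f i - f j = (h - 1) * f j" unfolding h_def using unit_cnj[OF nfj]
        by (simp add: algebra_simps)
      then have nd: "dist (f i) (f j) = norm (h - 1)" using nfj by (simp add: dist_norm norm_mult)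
      have "f i \<noteq> f j" using f(1) ij(1) by (metis inj_eq less_irrefl)
      then have "h \<noteq> 1" using nd by auto
      then have "e \<le> norm (h - 1)" using e(2) hH by blast
      then show False using ij(2) nd by simp
    qed
    define q :: nat where "q = fact (card H)"
    have q1: "q \<ge> 1" unfolding q_def by simp
    have hq: "h^q = 1" if hH: "h \<in> H" for h
    proof -
      have "card ((\<lambda>k. h^k) ` {0..card H}) \<le> card H"
        using hH Hpow finH by (intro card_mono) auto
      then have "card ((\<lambda>k. h^k) ` {0..card H}) < card {0..card H}" by simp
      then have "\<not> inj_on (\<lambda>k. h^k) {0..card H}" using pigeonhole by blast
      then obtain i j where ij: "i \<in> {0..card H}" "j \<in> {0..card H}" "i \<noteq> j" "h^i = h^j"
        unfolding inj_on_def by blast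
      have h0: "h \<noteq> 0" using hH HC by auto
      obtain a b where ab: "a < b" "b \<le> card H" "h^a = h^b"
      proof (cases "i < j")
        case True then show ?thesis using that[of i j] ij by auto
      next
        case False then show ?thesis using that[of j i] ij by auto
      qed
      have "h^b = h^a * h^(b-a)" using ab(1) by (simp add: power_add[symmetric])
      then have d1: "h^(b-a) = 1" using ab(3) h0 by simp
      have "(b - a) dvd q" unfolding q_def using ab by (intro dvd_fact) auto
      then obtain c where "q = (b-a) * c" by (auto elim: dvdE)
      then show ?thesis using d1 by (simp add: power_mult)
    qed
    define F where "F z = (SOME w. (z,w) \<in> M)^q" for z
    have Fw: "F z = w^q" if zw: "(z,w) \<in> M" for z w
    proof -
      define w1 where "w1 = (SOME w. (z,w) \<in> M)"
      have w1: "(z,w1) \<in> M" unfolding w1_def using zw by (rule someI)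
      have nw: "norm w = 1" "norm w1 = 1" using zw w1 M(1) by (auto simp: in_Xs)
      define t where "t = w * cnj w1"
      have nt: "norm t = 1" unfolding t_def using nw by (simp add: norm_mult)
      have tw: "t * w1 = w" unfolding t_def using unit_cnj[OF nw(2)] by (simp add: mult.commute mult.left_commute)
      have "St t ` M = M" using key[OF w1 _ nt] zw tw by simp
      then have "t \<in> H" unfolding H_def using nt by simp
      then have "t^q = 1" by (rule hq)
      then have "w^q = w1^q" unfolding tw[symmetric] by (simp add: power_mult_distrib)
      then show ?thesis unfolding F_def w1_def by simp
    qed
    have FC: "F ` Cc \<subseteq> Cc"
    proof
      fix y assume "y \<in> F ` Cc"
      then obtain z where z: "z \<in> Cc" "y = F z" by auto
      obtain w where w: "(z,w) \<in> M" using fiber[OF z(1)] by blast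
      have "norm w = 1" using w M(1) by (auto simp: in_Xs)
      then show "y \<in> Cc" using z Fw[OF w] by (simp add: norm_power)
    qed
    have graph: "(\<lambda>z. (z, F z)) ` Cc = (\<lambda>p. (fst p, (snd p)^q)) ` M"
    proof
      show "(\<lambda>z. (z, F z)) ` Cc \<subseteq> (\<lambda>p. (fst p, (snd p)^q)) ` M"
      proof
        fix y assume "y \<in> (\<lambda>z. (z, F z)) ` Cc"
        then obtain z where z: "z \<in> Cc" "y = (z, F z)" by auto
        obtain w where w: "(z,w) \<in> M" using fiber[OF z(1)] by blast
        show "y \<in> (\<lambda>p. (fst p, (snd p)^q)) ` M" using z Fw[OF w] w by force
      qed
      show "(\<lambda>p. (fst p, (snd p)^q)) ` M \<subseteq> (\<lambda>z. (z, F z)) ` Cc"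
      proof
        fix y assume "y \<in> (\<lambda>p. (fst p, (snd p)^q)) ` M"
        then obtain z w where zw: "(z,w) \<in> M" "y = (z, w^q)" by auto
        have "z \<in> Cc" using zw M(1) by (auto simp: in_Xs)
        then show "y \<in> (\<lambda>z. (z, F z)) ` Cc" using zw Fw[OF zw(1)] by force
      qed
    qed
    have "compact ((\<lambda>p. (fst p, (snd p)^q)) ` M)"
      by (rule compact_continuous_image[OF _ compM]) (intro continuous_intros)
    then have clg: "closed ((\<lambda>z. (z, F z)) ` Cc)" unfolding graph by (rule compact_imp_closed)
    have contF: "continuous_on Cc F"
      by (rule continuous_from_closed_graph[of Cc]) (use FC clg in \<open>auto simp: Cc_def\<close>)
    have feq: "F (cis (2*pi*alpha) * z) = z^q * F z" if z: "z \<in> Cc" for z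
    proof -
      obtain w where w: "(z,w) \<in> M" using fiber[OF z] by blast
      have "Tm (z,w) \<in> M" using w M(4) by blast
      then have "(cis (2*pi*alpha) * z, z * w) \<in> M" by (simp add: Tm_def lam_def)
      then have "F (cis (2*pi*alpha) * z) = (z*w)^q" by (rule Fw)
      also have "\<dots> = z^q * F z" using Fw[OF w] by (simp add: power_mult_distrib)
      finally show ?thesis .
    qed
    show ?thesis using no_twisted_map[OF contF FC feq q1] by blast
  qed
qed



lemma minimal_m0: "minimal_tds m0 Tm"
  unfolding minimal_tds_def mtop_m0 mspace_m0
proof
  fix p assume p: "p \<in> Xs"
  define Orb where "Orb = {(Tm ^^ n) p |n. True}"
  have OX: "Orb \<subseteq> Xs" unfolding Orb_def using iter_in[OF p] by auto
  have cl: "top_of_set Xs closure_of Orb = Xs \<inter> closure Orb"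
    unfolding closure_of_subtopology euclidean_closure_of using OX by (simp add: Int_absorb1)
  define K where "K = closure Orb"
  have KX: "K \<subseteq> Xs" unfolding K_def using OX closed_Xs by (rule closure_minimal)
  have cK: "compact K" using KX compact_Xs unfolding K_def
    by (metis closed_Int_compact closed_closure inf.absorb1)
  have "p \<in> Orb" unfolding Orb_def by (metis (mono_tags) CollectI funpow_0)
  then have Kne: "K \<noteq> {}" unfolding K_def using closure_subset by blast
  have TO: "Tm ` Orb \<subseteq> Orb"
  proof
    fix x assume "x \<in> Tm ` Orb"
    then obtain n where "x = Tm ((Tm^^n) p)" unfolding Orb_def by auto
    then have "x = (Tm^^(Suc n)) p" by simp
    then show "x \<in> Orb" unfolding Orb_def by blast
  qed
  then have "Tm ` Orb \<subseteq> closure Orb" using closure_subset by blast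
  then have TK: "Tm ` K \<subseteq> K" unfolding K_def
    by (rule image_closure_subset[OF continuous_on_subset[OF cont_Tm] closed_closure, rotated]) simp
  obtain M where M: "M \<subseteq> K" "M \<noteq> {}" "closed M" "Tm ` M \<subseteq> M"
    "\<And>N. N \<subseteq> M \<and> N \<noteq> {} \<and> closed N \<and> Tm ` N \<subseteq> N \<Longrightarrow> N = M"
    using exists_minimal[OF cK Kne TK] by blast
  have "M = Xs"
  proof (rule minimal_full)
    show "M \<subseteq> Xs" using M(1) KX by simp
    show "M \<noteq> {}" "closed M" "Tm ` M \<subseteq> M" using M by auto
    show "\<And>N. N \<subseteq> M \<Longrightarrow> N \<noteq> {} \<Longrightarrow> closed N \<Longrightarrow> Tm ` N \<subseteq> N \<Longrightarrow> N = M"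
      using M(5) by blast
  qed
  then have "Xs \<subseteq> K" using M(1) by simp
  then show "top_of_set Xs closure_of Orb = Xs" unfolding cl K_def by blast
qed

definition enc :: "real \<Rightarrow> nat \<Rightarrow> nat" where
  "enc r n = (if of_rat (from_nat n) < r then 1 else 0)"

lemma enc_inj: "enc r = enc s \<Longrightarrow> r = s"
proof (rule ccontr)
  assume e: "enc r = enc s" and ne: "r \<noteq> s"
  have lt: "enc a \<noteq> enc b" if ab: "a < b" for a b
  proof -
    obtain x where x: "x \<in> \<rat>" "a < x" "x < b" using Rats_dense_in_real[OF ab] by blast
    then obtain q where q: "x = of_rat q" by (cases rule: Rats_cases) auto
    have "enc a (to_nat q) = 0" "enc b (to_nat q) = 1" unfolding enc_def using x q by auto
    then show ?thesis by (metis zero_neq_one)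
  qed
  show False
  proof (cases "r < s")
    case True then show False using lt[OF True] e by simp
  next
    case False then have "s < r" using ne by simp
    then show False using lt e by metis
  qed
qed

definition Enc :: "complex \<times> complex \<Rightarrow> nat \<Rightarrow> nat" where
  "Enc p n = (if n mod 4 = 0 then enc (Re (fst p)) (n div 4)
              else if n mod 4 = 1 then enc (Im (fst p)) (n div 4)
              else if n mod 4 = 2 then enc (Re (snd p)) (n div 4)
              else enc (Im (snd p)) (n div 4))"

lemma div4_facts:
  "Suc (4*k) div 4 = (k::nat)" "Suc (Suc (4*k)) div 4 = k" "Suc (Suc (Suc (4*k))) div 4 = k"
  "Suc (4*k) mod 4 = 1" "Suc (Suc (4*k)) mod 4 = 2" "Suc (Suc (Suc (4*k))) mod 4 = 3"
  by presburger+

lemma Enc_inj: "inj Enc"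
proof (rule injI)
  fix p p' assume e: "Enc p = Enc p'"
  have c: "enc (Re (fst p)) = enc (Re (fst p'))" "enc (Im (fst p)) = enc (Im (fst p'))"
    "enc (Re (snd p)) = enc (Re (snd p'))" "enc (Im (snd p)) = enc (Im (snd p'))"
  proof -
    have ee: "Enc p (4*k + j) = Enc p' (4*k + j)" for k j using e by simp
    show "enc (Re (fst p)) = enc (Re (fst p'))"
    proof (rule ext)
      fix k show "enc (Re (fst p)) k = enc (Re (fst p')) k" using ee[of k 0] by (simp add: Enc_def div4_facts)
    qed
    show "enc (Im (fst p)) = enc (Im (fst p'))"
    proof (rule ext)
      fix k show "enc (Im (fst p)) k = enc (Im (fst p')) k" using ee[of k 1] by (simp add: Enc_def div4_facts)
    qed
    show "enc (Re (snd p)) = enc (Re (snd p'))"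
    proof (rule ext)
      fix k show "enc (Re (snd p)) k = enc (Re (snd p')) k" using ee[of k 2] by (simp add: Enc_def div4_facts)
    qed
    show "enc (Im (snd p)) = enc (Im (snd p'))"
    proof (rule ext)
      fix k show "enc (Im (snd p)) k = enc (Im (snd p')) k" using ee[of k 3] by (simp add: Enc_def div4_facts)
    qed
  qed
  then show "p = p'" by (auto intro!: prod_eqI complex_eqI dest: enc_inj)
qed

definition d1 :: "(nat \<Rightarrow> nat) \<Rightarrow> (nat \<Rightarrow> nat) \<Rightarrow> real" where
  "d1 u v = dist (inv_into Xs Enc u) (inv_into Xs Enc v)"

lemma Metric_space_d1: "Metric_space (Enc ` Xs) d1"
proof
  fix x y assume xy: "x \<in> Enc ` Xs" "y \<in> Enc ` Xs"
  have "inv_into Xs Enc x = inv_into Xs Enc y \<longleftrightarrow> x = y"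
    using xy by (metis f_inv_into_f)
  then show "d1 x y = 0 \<longleftrightarrow> x = y" unfolding d1_def by simp
next
  fix x y z show "d1 x z \<le> d1 x y + d1 y z" unfolding d1_def by (rule dist_triangle)
qed (auto simp: d1_def dist_commute)

definition m1 :: "(nat \<Rightarrow> nat) metric" where "m1 = metric (Enc ` Xs, d1)"
definition T1 :: "(nat \<Rightarrow> nat) \<Rightarrow> (nat \<Rightarrow> nat)" where
  "T1 u = Enc (Tm (inv_into Xs Enc u))"

lemma conj01: "conjm m0 Tm m1 T1 Enc"
proof -
  have ms: "mspace m1 = Enc ` Xs" "mdist m1 = d1"
    unfolding m1_def using Metric_space.mspace_metric[OF Metric_space_d1]
      Metric_space.mdist_metric[OF Metric_space_d1] by auto
  have ii: "inv_into Xs Enc (Enc x) = x" if "x \<in> Xs" for x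
    using inj_on_subset[OF Enc_inj subset_UNIV] that by (rule inv_into_f_f)
  show ?thesis unfolding conjm_def ms mspace_m0 mdist_m0
    using Tm_in by (auto simp: d1_def T1_def ii)
qed


theorem corollary4p3:
  shows "\<exists>(m :: (nat \<Rightarrow> nat) metric) T. tds m T \<and> minimal_tds m T
           \<and> Ft_sensitive m T \<and> \<not> strongly_Ft_sensitive m T"
proof (intro exI[of _ m1] exI[of _ T1] conjI)
  show "tds m1 T1" using conjm_tds[OF conj01 tds_m0] .
  show "minimal_tds m1 T1" using conjm_minimal[OF conj01 minimal_m0] .
  show "Ft_sensitive m1 T1" using conjm_Ft[OF conj01 Ft_m0] .
  show "\<not> strongly_Ft_sensitive m1 T1"
    using conjm_strong[OF conjm_sym[OF conj01]] not_strong_m0 by blast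
qed

end
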